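(* Let $\mathbf{r}_1,\mathbf{r}_2,\mathbf{s}_1,\mathbf{s}_2\in\mathbb{R}^2$ satisfy the nondegeneracy conditions $\mathbf{r}_1\cdot\mathbf{r}_2^{\perp}\neq 0$ and $\mathbf{s}_1\cdot\mathbf{s}_2^{\perp}\neq 0$. Suppose there exist $\lambda\in\mathbb{R}\setminus\{0\}$ and $(p_a^\star,q_a^\star),(p_b^\star,q_b^\star)\in\mathbb{Z}^2\setminus\{\mathbf{0}\}$ with $(p_a^\star,q_a^\star)\neq(p_b^\star,q_b^\star)$ such that $$p_a^\star\mathbf{r}_1+q_a^\star\mathbf{r}_2=(\lambda,0),\qquad p_b^\star\mathbf{s}_1+q_b^\star\mathbf{s}_2=(\lambda,0).$$ Let $(\hat{\mathbf{r}}_1,\hat{\mathbf{r}}_2)$ and $(\hat{\mathbf{s}}_1,\hat{\mathbf{s}}_2)$ be the reciprocal vectors of $(\mathbf{r}_1,\mathbf{r}_2)$ and $(\mathbf{s}_1,\mathbf{s}_2)$, respectively, and set $\hat{\mathbf{t}}_1=\hat{\mathbf{s}}_1-\hat{\mathbf{r}}_1$, $\hat{\mathbf{t}}_2=\hat{\mathbf{s}}_2-\hat{\mathbf{r}}_2$. Assume $\hat{\mathbf{t}}_1\cdot\hat{\mathbf{t}}_2^{\perp}\neq 0$, and let $(\mathbf{t}_1,\mathbf{t}_2)$ be the reciprocal vectors of $(\hat{\mathbf{t}}_1,\hat{\mathbf{t}}_2)$. Then $$(p_b^\star-p_a^\star)\,\mathbf{t}_1+(q_b^\star-q_a^\star)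\,\mathbf{t}_2=(\lambda,0).$$
   Context: For $\mathbf{u}=(u_1,u_2)\in\mathbb{R}^2$, $\mathbf{u}^\perp$ denotes its rotation by $90^\circ$, e.g. $\mathbf{u}^\perp=(-u_2,u_1)$, so $\mathbf{u}_1\cdot\mathbf{u}_2^\perp\neq 0$ means $\mathbf{u}_1,\mathbf{u}_2$ are linearly independent. For a linearly independent pair $(\mathbf{u}_1,\mathbf{u}_2)$ in $\mathbb{R}^2$, its reciprocal vectors are the unique pair $(\hat{\mathbf{u}}_1,\hat{\mathbf{u}}_2)$ in $\mathbb{R}^2$ with $\mathbf{u}_i\cdot\hat{\mathbf{u}}_j=\delta_{ij}$ for $i,j\in\{1,2\}$ (no factor $2\pi$). *)

theory Defs
  imports "HOL-Analysis.Analysis"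
begin

definition perp :: "real \<times> real \<Rightarrow> real \<times> real" where
  "perp u = (- snd u, fst u)"

text \<open>(v1, v2) are the reciprocal vectors of (u1, u2): u_i \<bullet> v_j = delta_ij (no factor 2 pi).\<close>
definition reciprocal :: "real \<times> real \<Rightarrow> real \<times> real \<Rightarrow> real \<times> real \<Rightarrow> real \<times> real \<Rightarrow> bool" where
  "reciprocal u1 u2 v1 v2 \<longleftrightarrow>
     u1 \<bullet> v1 = 1 \<and> u1 \<bullet> v2 = 0 \<and> u2 \<bullet> v1 = 0 \<and> u2 \<bullet> v2 = 1"

end

theory Submission
  imports Defs
begin

lemma indep_zero:
  fixes u1 u2 w :: "real \<times> real"
  assumes "u1 \<bullet> perp u2 \<noteq> 0" "u1 \<bullet> w = 0" "u2 \<bullet> w = 0"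
  shows "w = 0"
proof -
  obtain a b where u1: "u1 = (a,b)" by fastforce
  obtain c d where u2: "u2 = (c,d)" by fastforce
  obtain x y where w: "w = (x,y)" by fastforce
  have h: "a*d - b*c \<noteq> 0" "a*x+b*y = 0" "c*x+d*y=0"
    using assms by (auto simp: u1 u2 w perp_def inner_prod_def algebra_simps)
  have "x*(a*d-b*c) = d*(a*x+b*y) - b*(c*x+d*y)" by (simp add: algebra_simps)
  hence "x*(a*d-b*c) = 0" using h(2,3) by simp
  moreover have "y*(a*d-b*c) = a*(c*x+d*y) - c*(a*x+b*y)" by (simp add: algebra_simps)
  hence "y*(a*d-b*c) = 0" using h(2,3) by simp
  ultimately show ?thesis using h(1) by (simp add: w zero_prod_def)
qed

theorem theorem2:
  fixes r1 r2 s1 s2 rh1 rh2 sh1 sh2 t1 t2 :: "real \<times> real"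
    and lam :: real and pa qa pb qb :: int
  assumes "r1 \<bullet> perp r2 \<noteq> 0" and "s1 \<bullet> perp s2 \<noteq> 0"
    and "lam \<noteq> 0"
    and "(pa, qa) \<noteq> (0, 0)" and "(pb, qb) \<noteq> (0, 0)" and "(pa, qa) \<noteq> (pb, qb)"
    and "of_int pa *\<^sub>R r1 + of_int qa *\<^sub>R r2 = (lam, 0)"
    and "of_int pb *\<^sub>R s1 + of_int qb *\<^sub>R s2 = (lam, 0)"
    and "reciprocal r1 r2 rh1 rh2" and "reciprocal s1 s2 sh1 sh2"
    and "(sh1 - rh1) \<bullet> perp (sh2 - rh2) \<noteq> 0"
    and "reciprocal (sh1 - rh1) (sh2 - rh2) t1 t2"
  shows "of_int (pb - pa) *\<^sub>R t1 + of_int (qb - qa) *\<^sub>R t2 = (lam, 0)"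
proof -
  define v where "v = (lam, 0::real)"
  have r: "r1 \<bullet> rh1 = 1" "r1 \<bullet> rh2 = 0" "r2 \<bullet> rh1 = 0" "r2 \<bullet> rh2 = 1"
    using assms(9) unfolding reciprocal_def by auto
  have s: "s1 \<bullet> sh1 = 1" "s1 \<bullet> sh2 = 0" "s2 \<bullet> sh1 = 0" "s2 \<bullet> sh2 = 1"
    using assms(10) unfolding reciprocal_def by auto
  have t: "(sh1 - rh1) \<bullet> t1 = 1" "(sh1 - rh1) \<bullet> t2 = 0" "(sh2 - rh2) \<bullet> t1 = 0" "(sh2 - rh2) \<bullet> t2 = 1"
    using assms(12) unfolding reciprocal_def by auto
  have v1: "v \<bullet> rh1 = pa" "v \<bullet> rh2 = qa"
    using r unfolding v_def assms(7)[symmetric] by (auto simp: inner_add_left)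
  have v2: "v \<bullet> sh1 = pb" "v \<bullet> sh2 = qb"
    using s unfolding v_def assms(8)[symmetric] by (auto simp: inner_add_left)
  define w where "w = v - (of_int (pb - pa) *\<^sub>R t1 + of_int (qb - qa) *\<^sub>R t2)"
  have "(sh1 - rh1) \<bullet> w = 0"
    using t v1 v2 unfolding w_def
    by (simp add: inner_diff_left inner_diff_right inner_add_right inner_commute[of v])
  moreover have "(sh2 - rh2) \<bullet> w = 0"
    using t v1 v2 unfolding w_def
    by (simp add: inner_diff_left inner_diff_right inner_add_right inner_commute[of v])
  ultimately have "w = 0" using indep_zero assms(11) by blast
  thus ?thesis unfolding w_def v_def by simp
qed

end
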